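(* Let $a\neq\pm1$ be a square-free integer and let $F$ be a finite Galois extension of $\mathbb{Q}$. Then there exists an integer $N$ such that whenever $a$ is an $m$th power in the compositum $F\cdot\mathbb{Q}^{\mathrm{ab}}$ (for a positive integer $m$), $m$ divides $N$.
   Context: $\mathbb{Q}^{\mathrm{ab}}$ denotes the maximal abelian extension of $\mathbb{Q}$ in a fixed algebraic closure containing $F$. *)

theory Defs
  imports Complex_Main "HOL-Computational_Algebra.Computational_Algebra"
begin

text \<open>We work inside the algebraically closed field of complex numbers, which contains
  a fixed algebraic closure of the rationals. All fields below are subfields of this.\<close>

definition subfield_C :: "complex set \<Rightarrow> bool" where
  "subfield_C K \<longleftrightarrow> 0 \<in> K \<and> 1 \<in> K \<and>
     (\<forall>x\<in>K. \<forall>y\<in>K. x + y \<in> K \<and> x - y \<in> K \<and> x * y \<in> K) \<and>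
     (\<forall>x\<in>K. x \<noteq> 0 \<longrightarrow> inverse x \<in> K)"

definition finite_over_Q :: "complex set \<Rightarrow> bool" where
  "finite_over_Q K \<longleftrightarrow> (\<exists>B. finite B \<and> B \<subseteq> K \<and>
     K = {\<Sum>b\<in>B. of_rat (c b) * b | c :: complex \<Rightarrow> rat. True})"

text \<open>Normality: the minimal polynomial over Q of every element splits in K
  (separability is automatic in characteristic 0).\<close>
definition normal_over_Q :: "complex set \<Rightarrow> bool" where
  "normal_over_Q K \<longleftrightarrow> (\<forall>x\<in>K. \<forall>p :: rat poly. irreducible p \<and>
     poly (map_poly of_rat p) x = 0 \<longrightarrow> (\<forall>y. poly (map_poly of_rat p) y = 0 \<longrightarrow> y \<in> K))"

definition finite_galois_over_Q :: "complex set \<Rightarrow> bool" where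
  "finite_galois_over_Q K \<longleftrightarrow> subfield_C K \<and> finite_over_Q K \<and> normal_over_Q K"

text \<open>Field automorphisms of K (they automatically fix Q).\<close>
definition field_auts :: "complex set \<Rightarrow> (complex \<Rightarrow> complex) set" where
  "field_auts K = {\<sigma>. bij_betw \<sigma> K K \<and> \<sigma> 1 = 1 \<and>
     (\<forall>x\<in>K. \<forall>y\<in>K. \<sigma> (x + y) = \<sigma> x + \<sigma> y \<and> \<sigma> (x * y) = \<sigma> x * \<sigma> y)}"

definition abelian_galois_over_Q :: "complex set \<Rightarrow> bool" where
  "abelian_galois_over_Q K \<longleftrightarrow> finite_galois_over_Q K \<and>
     (\<forall>\<sigma>\<in>field_auts K. \<forall>\<tau>\<in>field_auts K. \<forall>x\<in>K. \<sigma> (\<tau> x) = \<tau> (\<sigma> x))"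

definition Qab :: "complex set" where
  "Qab = \<Union> {K. abelian_galois_over_Q K}"

definition compositum :: "complex set \<Rightarrow> complex set \<Rightarrow> complex set" where
  "compositum A B = \<Inter> {L. subfield_C L \<and> A \<subseteq> L \<and> B \<subseteq> L}"

end

theory Submission
  imports Defs "HOL-Library.FuncSet"
begin


section \<open>Subfields\<close>

lemma sf_0: "subfield_C K \<Longrightarrow> 0 \<in> K" by (simp add: subfield_C_def)
lemma sf_1: "subfield_C K \<Longrightarrow> 1 \<in> K" by (simp add: subfield_C_def)
lemma sf_add: "subfield_C K \<Longrightarrow> x \<in> K \<Longrightarrow> y \<in> K \<Longrightarrow> x + y \<in> K" by (simp add: subfield_C_def)
lemma sf_diff: "subfield_C K \<Longrightarrow> x \<in> K \<Longrightarrow> y \<in> K \<Longrightarrow> x - y \<in> K" by (simp add: subfield_C_def)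
lemma sf_mult: "subfield_C K \<Longrightarrow> x \<in> K \<Longrightarrow> y \<in> K \<Longrightarrow> x * y \<in> K" by (simp add: subfield_C_def)
lemma sf_inverse: "subfield_C K \<Longrightarrow> x \<in> K \<Longrightarrow> inverse x \<in> K"
  by (cases "x = 0") (auto simp add: subfield_C_def)
lemma sf_uminus: "subfield_C K \<Longrightarrow> x \<in> K \<Longrightarrow> - x \<in> K"
  using sf_diff[of K 0 x] sf_0[of K] by simp
lemma sf_divide: "subfield_C K \<Longrightarrow> x \<in> K \<Longrightarrow> y \<in> K \<Longrightarrow> x / y \<in> K"
  by (simp add: divide_inverse sf_mult sf_inverse)
lemma sf_power: "subfield_C K \<Longrightarrow> x \<in> K \<Longrightarrow> x ^ n \<in> K"
  by (induction n) (auto simp: sf_1 sf_mult)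
lemma sf_sum: "subfield_C K \<Longrightarrow> (\<And>i. i \<in> A \<Longrightarrow> f i \<in> K) \<Longrightarrow> sum f A \<in> K"
  by (induction A rule: infinite_finite_induct) (auto simp: sf_0 sf_add)
lemma sf_prod: "subfield_C K \<Longrightarrow> (\<And>i. i \<in> A \<Longrightarrow> f i \<in> K) \<Longrightarrow> prod f A \<in> K"
  by (induction A rule: infinite_finite_induct) (auto simp: sf_1 sf_mult)
lemma sf_of_nat: "subfield_C K \<Longrightarrow> of_nat n \<in> K"
  by (induction n) (auto simp: sf_0 sf_1 sf_add)
lemma sf_of_int: "subfield_C K \<Longrightarrow> of_int n \<in> K"
proof (cases "n \<ge> 0")
  case True
  assume K: "subfield_C K"
  then show ?thesis using True sf_of_nat[OF K, of "nat n"] by simp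
next
  case False
  assume K: "subfield_C K"
  then have "of_int n = - (of_nat (nat (-n)) :: complex)" using False by simp
  then show ?thesis using sf_uminus[OF K sf_of_nat[OF K]] by simp
qed
lemma sf_of_rat: "subfield_C K \<Longrightarrow> (of_rat r :: complex) \<in> K"
proof -
  assume K: "subfield_C K"
  obtain a b where "r = of_int a / of_int b" by (metis Fract_of_int_quotient Rat_cases)
  then have "(of_rat r :: complex) = of_int a / of_int b" by (simp add: of_rat_divide)
  then show ?thesis by (simp add: K sf_divide sf_of_int)
qed
lemma sf_Rats: "subfield_C K \<Longrightarrow> x \<in> \<rat> \<Longrightarrow> x \<in> K"
  by (auto elim!: Rats_cases simp: sf_of_rat)

lemma subfield_Rats: "subfield_C \<rat>"
  unfolding subfield_C_def by auto

lemma subfield_Inter: "(\<And>L. L \<in> S \<Longrightarrow> subfield_C L) \<Longrightarrow> subfield_C (\<Inter> S)"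
  unfolding subfield_C_def by auto

section \<open>Homomorphisms on subsets\<close>

definition hom_on :: "complex set \<Rightarrow> (complex \<Rightarrow> complex) \<Rightarrow> bool" where
  "hom_on M t \<longleftrightarrow> t 1 = 1 \<and> (\<forall>x\<in>M. \<forall>y\<in>M. t (x + y) = t x + t y \<and> t (x * y) = t x * t y)"

lemma hom_add: "hom_on M t \<Longrightarrow> x \<in> M \<Longrightarrow> y \<in> M \<Longrightarrow> t (x + y) = t x + t y"
  by (simp add: hom_on_def)
lemma hom_mult: "hom_on M t \<Longrightarrow> x \<in> M \<Longrightarrow> y \<in> M \<Longrightarrow> t (x * y) = t x * t y"
  by (simp add: hom_on_def)
lemma hom_1: "hom_on M t \<Longrightarrow> t 1 = 1"
  by (simp add: hom_on_def)
lemma hom_0: "hom_on M t \<Longrightarrow> subfield_C M \<Longrightarrow> t 0 = 0"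
  using hom_add[of M t 0 0] sf_0[of M] by simp
lemma hom_uminus: "hom_on M t \<Longrightarrow> subfield_C M \<Longrightarrow> x \<in> M \<Longrightarrow> t (- x) = - t x"
  using hom_add[of M t x "-x"] hom_0[of M t] sf_uminus[of M x]
  by (simp add: add_eq_0_iff)
lemma hom_diff: "hom_on M t \<Longrightarrow> subfield_C M \<Longrightarrow> x \<in> M \<Longrightarrow> y \<in> M \<Longrightarrow> t (x - y) = t x - t y"
  using hom_add[of M t x "-y"] hom_uminus[of M t y] sf_uminus[of M y] by simp
lemma hom_inverse: "hom_on M t \<Longrightarrow> subfield_C M \<Longrightarrow> x \<in> M \<Longrightarrow> t (inverse x) = inverse (t x)"
proof (cases "x = 0")
  case True
  assume h: "hom_on M t" "subfield_C M"
  then show ?thesis using True hom_0[OF h] by simp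
next
  case False
  assume h: "hom_on M t" "subfield_C M" "x \<in> M"
  have "t x * t (inverse x) = 1"
    using hom_mult[OF h(1) h(3) sf_inverse[OF h(2,3)]] False hom_1[OF h(1)] by simp
  then show ?thesis by (metis inverse_unique)
qed
lemma hom_nonzero: "hom_on M t \<Longrightarrow> subfield_C M \<Longrightarrow> x \<in> M \<Longrightarrow> x \<noteq> 0 \<Longrightarrow> t x \<noteq> 0"
  using hom_mult[of M t x "inverse x"] sf_inverse[of M x] hom_1[of M t] by fastforce
lemma hom_inj: "hom_on M t \<Longrightarrow> subfield_C M \<Longrightarrow> inj_on t M"
  unfolding inj_on_def
  using hom_diff hom_nonzero sf_diff by (metis eq_iff_diff_eq_0)
lemma hom_divide: "hom_on M t \<Longrightarrow> subfield_C M \<Longrightarrow> x \<in> M \<Longrightarrow> y \<in> M \<Longrightarrow> t (x / y) = t x / t y"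
  by (simp add: divide_inverse hom_mult hom_inverse sf_inverse)
lemma hom_power: "hom_on M t \<Longrightarrow> subfield_C M \<Longrightarrow> x \<in> M \<Longrightarrow> t (x ^ n) = t x ^ n"
  by (induction n) (auto simp: hom_1 hom_mult sf_power)
lemma hom_sum: "hom_on M t \<Longrightarrow> subfield_C M \<Longrightarrow> (\<And>i. i \<in> A \<Longrightarrow> f i \<in> M) \<Longrightarrow> t (sum f A) = (\<Sum>i\<in>A. t (f i))"
  by (induction A rule: infinite_finite_induct) (auto simp: hom_0 hom_add sf_sum)
lemma hom_prod: "hom_on M t \<Longrightarrow> subfield_C M \<Longrightarrow> (\<And>i. i \<in> A \<Longrightarrow> f i \<in> M) \<Longrightarrow> t (prod f A) = (\<Prod>i\<in>A. t (f i))"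
  by (induction A rule: infinite_finite_induct) (auto simp: hom_1 hom_mult sf_prod)
lemma hom_of_nat: "hom_on M t \<Longrightarrow> subfield_C M \<Longrightarrow> t (of_nat n) = of_nat n"
  by (induction n) (auto simp: hom_0 hom_1 hom_add sf_of_nat sf_1)
lemma hom_of_int: "hom_on M t \<Longrightarrow> subfield_C M \<Longrightarrow> t (of_int n) = of_int n"
proof (cases "n \<ge> 0")
  case True
  assume K: "hom_on M t" "subfield_C M"
  then show ?thesis using True hom_of_nat[OF K, of "nat n"] by simp
next
  case False
  assume K: "hom_on M t" "subfield_C M"
  then have "of_int n = - (of_nat (nat (-n)) :: complex)" using False by simp
  then show ?thesis using hom_uminus[OF K sf_of_nat[OF K(2)]] hom_of_nat[OF K] by simp
qed
lemma hom_of_rat: "hom_on M t \<Longrightarrow> subfield_C M \<Longrightarrow> t (of_rat r) = of_rat r"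
proof -
  assume K: "hom_on M t" "subfield_C M"
  obtain a b where "r = of_int a / of_int b" by (metis Fract_of_int_quotient Rat_cases)
  then have "(of_rat r :: complex) = of_int a / of_int b" by (simp add: of_rat_divide)
  then show ?thesis using hom_divide[OF K sf_of_int[OF K(2)] sf_of_int[OF K(2)]] hom_of_int[OF K] by simp
qed
lemma hom_Rats: "hom_on M t \<Longrightarrow> subfield_C M \<Longrightarrow> x \<in> \<rat> \<Longrightarrow> t x = x"
  by (auto elim!: Rats_cases simp: hom_of_rat)

lemma hom_on_subset: "hom_on L t \<Longrightarrow> M \<subseteq> L \<Longrightarrow> hom_on M t"
  unfolding hom_on_def by blast

lemma hom_on_id: "hom_on M id" by (simp add: hom_on_def)
lemma hom_on_cnj: "hom_on M cnj" by (simp add: hom_on_def)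

section \<open>Polynomials with coefficients in a subfield\<close>

definition over :: "complex set \<Rightarrow> complex poly \<Rightarrow> bool" where
  "over M p \<longleftrightarrow> (\<forall>i. coeff p i \<in> M)"

lemma over_coeff: "over M p \<Longrightarrow> coeff p i \<in> M" by (simp add: over_def)
lemma over_0: "subfield_C M \<Longrightarrow> over M 0" by (simp add: over_def sf_0)
lemma over_const: "subfield_C M \<Longrightarrow> c \<in> M \<Longrightarrow> over M [:c:]"
  by (auto simp: over_def coeff_pCons sf_0 split: nat.splits)
lemma over_pCons: "subfield_C M \<Longrightarrow> over M (pCons c p) \<longleftrightarrow> c \<in> M \<and> over M p"
  unfolding over_def by (metis coeff_pCons_0 coeff_pCons_Suc not0_implies_Suc)
lemma over_add: "subfield_C M \<Longrightarrow> over M p \<Longrightarrow> over M q \<Longrightarrow> over M (p + q)"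
  by (simp add: over_def sf_add)
lemma over_diff: "subfield_C M \<Longrightarrow> over M p \<Longrightarrow> over M q \<Longrightarrow> over M (p - q)"
  by (simp add: over_def sf_diff)
lemma over_smult: "subfield_C M \<Longrightarrow> c \<in> M \<Longrightarrow> over M p \<Longrightarrow> over M (smult c p)"
  by (simp add: over_def sf_mult)
lemma over_monom: "subfield_C M \<Longrightarrow> c \<in> M \<Longrightarrow> over M (monom c n)"
  by (simp add: over_def sf_0)
lemma over_mult: "subfield_C M \<Longrightarrow> over M p \<Longrightarrow> over M q \<Longrightarrow> over M (p * q)"
  unfolding over_def coeff_mult by (auto intro!: sf_sum sf_mult)
lemma over_pX: "subfield_C M \<Longrightarrow> over M [:0, 1:]"
  by (simp add: over_pCons sf_0 sf_1 over_0)
lemma over_mono: "over M p \<Longrightarrow> M \<subseteq> N \<Longrightarrow> over N p"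
  by (auto simp: over_def)

lemma poly_in_sf: "subfield_C M \<Longrightarrow> over M p \<Longrightarrow> x \<in> M \<Longrightarrow> poly p x \<in> M"
  by (induction p) (auto simp: over_pCons sf_add sf_mult sf_0)

lemma poly_closed:
  assumes "\<rat> \<subseteq> R" "\<And>x y. x \<in> R \<Longrightarrow> y \<in> R \<Longrightarrow> x + y \<in> R"
    "\<And>x y. x \<in> R \<Longrightarrow> y \<in> R \<Longrightarrow> x * y \<in> R" "w \<in> R" "over \<rat> q"
  shows "poly q w \<in> R"
  using assms(5)
proof (induction q)
  case 0
  then show ?case using assms(1) by auto
next
  case (pCons a q)
  then have "a \<in> \<rat>" "over \<rat> q" by (auto simp: over_pCons subfield_Rats)
  with pCons show ?case using assms by auto
qed

lemma coeff_map_hom: "hom_on M t \<Longrightarrow> subfield_C M \<Longrightarrow> coeff (map_poly t p) i = t (coeff p i)"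
  by (simp add: coeff_map_poly hom_0)

lemma map_hom_add: "hom_on M t \<Longrightarrow> subfield_C M \<Longrightarrow> over M p \<Longrightarrow> over M q \<Longrightarrow>
  map_poly t (p + q) = map_poly t p + map_poly t q"
  by (rule poly_eqI) (simp add: coeff_map_hom hom_add over_coeff)

lemma map_hom_diff: "hom_on M t \<Longrightarrow> subfield_C M \<Longrightarrow> over M p \<Longrightarrow> over M q \<Longrightarrow>
  map_poly t (p - q) = map_poly t p - map_poly t q"
  by (rule poly_eqI) (simp add: coeff_map_hom hom_diff over_coeff)

lemma map_hom_mult: "hom_on M t \<Longrightarrow> subfield_C M \<Longrightarrow> over M p \<Longrightarrow> over M q \<Longrightarrow>
  map_poly t (p * q) = map_poly t p * map_poly t q"
  apply (rule poly_eqI)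
  apply (simp add: coeff_map_hom coeff_mult)
  apply (subst hom_sum, assumption, assumption)
   apply (simp add: over_coeff sf_mult)
  apply (simp add: hom_mult over_coeff)
  done

lemma map_hom_const: "hom_on M t \<Longrightarrow> subfield_C M \<Longrightarrow> map_poly t [:c:] = [:t c:]"
  by (rule poly_eqI) (simp add: coeff_map_hom coeff_pCons hom_0 split: nat.splits)

lemma map_hom_pX: "hom_on M t \<Longrightarrow> subfield_C M \<Longrightarrow> map_poly t [:0, 1:] = [:0, 1:]"
  by (rule poly_eqI) (simp add: coeff_map_hom coeff_pCons hom_0 hom_1 split: nat.splits)

lemma poly_hom_Rats:
  assumes "hom_on L t" "subfield_C L" "over \<rat> q" "z \<in> L"
  shows "poly q (t z) = t (poly q z)"
  using assms(3)
proof (induction q)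
  case 0
  then show ?case using assms by (simp add: hom_0)
next
  case (pCons a q)
  then have a: "a \<in> \<rat>" "over \<rat> q" by (auto simp: over_pCons subfield_Rats)
  have aL: "a \<in> L" using a sf_Rats assms by blast
  have qL: "poly q z \<in> L" using poly_in_sf[OF assms(2) over_mono[OF a(2)] assms(4)] sf_Rats[OF assms(2)] by blast
  show ?case using pCons a aL qL assms
    by (simp add: hom_add hom_mult sf_mult hom_Rats)
qed

section \<open>Division with remainder over a subfield\<close>

lemma div_exists:
  assumes M: "subfield_C M" and g: "over M g" "g \<noteq> 0"
  shows "over M p \<Longrightarrow> \<exists>q r. over M q \<and> over M r \<and> p = g * q + r \<and> (r = 0 \<or> degree r < degree g)"
proof (induction "degree p" arbitrary: p rule: less_induct)
  case less
  show ?case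
  proof (cases "p = 0 \<or> degree p < degree g")
    case True
    then show ?thesis using less.prems M by (intro exI[of _ 0] exI[of _ p]) (auto simp: over_0)
  next
    case False
    then have p0: "p \<noteq> 0" and dg: "degree g \<le> degree p" by auto
    define c where "c = lead_coeff p / lead_coeff g"
    define k where "k = degree p - degree g"
    define p' where "p' = p - monom c k * g"
    have cM: "c \<in> M" unfolding c_def using less.prems g by (simp add: over_coeff sf_divide M)
    have p'M: "over M p'" unfolding p'_def
      by (intro over_diff over_mult over_monom less.prems g cM M)
    have deg_le: "degree (monom c k * g) \<le> degree p"
      using degree_mult_le[of "monom c k" g] degree_monom_le[of c k] dg unfolding k_def by linarith
    have zero: "coeff p' i = 0" if "i \<ge> degree p" for i
    proof (cases "i = degree p")
      case True
      have "coeff (monom c k * g) i = c * lead_coeff g"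
        using True dg by (simp add: coeff_monom_mult k_def)
      also have "\<dots> = lead_coeff p" using g(2) by (simp add: c_def)
      finally show ?thesis using True by (simp add: p'_def)
    next
      case False
      then have "i > degree p" using that by simp
      then show ?thesis using deg_le by (simp add: p'_def coeff_eq_0)
    qed
    show ?thesis
    proof (cases "p' = 0")
      case True
      then have "p = g * monom c k + 0" by (simp add: p'_def mult.commute)
      then show ?thesis using cM M by (intro exI[of _ "monom c k"] exI[of _ 0]) (auto simp: over_monom over_0)
    next
      case False
      then have "degree p' < degree p"
        using zero leading_coeff_0_iff not_le by blast
      from less.hyps[OF this p'M] obtain q r where qr: "over M q" "over M r" "p' = g * q + r"
        "r = 0 \<or> degree r < degree g" by blast
      have "p = g * (q + monom c k) + r" using qr(3) by (simp add: p'_def algebra_simps)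
      then show ?thesis using qr cM M by (intro exI[of _ "q + monom c k"] exI[of _ r]) (auto simp: over_add over_monom)
    qed
  qed
qed

section \<open>Algebraic numbers and minimal polynomials over subfields\<close>

definition alg :: "complex \<Rightarrow> bool" where
  "alg z \<longleftrightarrow> (\<exists>p. p \<noteq> 0 \<and> over \<rat> p \<and> poly p z = 0)"

definition is_minp :: "complex set \<Rightarrow> complex \<Rightarrow> complex poly \<Rightarrow> bool" where
  "is_minp M a g \<longleftrightarrow> over M g \<and> lead_coeff g = 1 \<and> poly g a = 0 \<and>
     (\<forall>p. over M p \<and> p \<noteq> 0 \<and> poly p a = 0 \<longrightarrow> degree g \<le> degree p)"

lemma minp_exists:
  assumes M: "subfield_C M" and a: "alg a"
  shows "\<exists>g. is_minp M a g"
proof -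
  from a obtain p0 where p0: "p0 \<noteq> 0" "over \<rat> p0" "poly p0 a = 0" by (auto simp: alg_def)
  have p0M: "over M p0" using p0(2) sf_Rats[OF M] by (auto simp: over_def)
  define P where "P = (\<lambda>n. \<exists>p. over M p \<and> p \<noteq> 0 \<and> poly p a = 0 \<and> degree p = n)"
  have "P (degree p0)" using p0 p0M by (auto simp: P_def)
  then have "P (LEAST n. P n)" by (rule LeastI)
  then obtain p where p: "over M p" "p \<noteq> 0" "poly p a = 0" "degree p = (LEAST n. P n)" by (auto simp: P_def)
  have min: "degree p \<le> degree q" if "over M q" "q \<noteq> 0" "poly q a = 0" for q
    using p(4) Least_le[of P "degree q"] that by (auto simp: P_def)
  define g where "g = smult (inverse (lead_coeff p)) p"
  have "over M g" unfolding g_def using p M by (intro over_smult sf_inverse over_coeff) auto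
  moreover have "lead_coeff g = 1" using p(2) by (simp add: g_def)
  moreover have "poly g a = 0" using p by (simp add: g_def)
  moreover have "degree g = degree p" using p(2) by (simp add: g_def)
  ultimately show ?thesis using min unfolding is_minp_def by (intro exI[of _ g]) auto
qed

lemma minp_nonzero: "is_minp M a g \<Longrightarrow> g \<noteq> 0"
  by (auto simp: is_minp_def)

lemma minp_degree: "is_minp M a g \<Longrightarrow> degree g \<ge> 1"
proof (rule ccontr)
  assume h: "is_minp M a g" "\<not> degree g \<ge> 1"
  then have "degree g = 0" by simp
  then have "g = [:lead_coeff g:]" by (metis degree_0_id)
  then have "g = 1" using h(1) by (simp add: is_minp_def one_pCons)
  then show False using h(1) by (simp add: is_minp_def)
qed

lemma minp_dvd:
  assumes M: "subfield_C M" and g: "is_minp M a g" and p: "over M p" "poly p a = 0"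
  shows "\<exists>h. over M h \<and> p = g * h"
proof -
  have gM: "over M g" "g \<noteq> 0" using g by (auto simp: is_minp_def)
  obtain q r where qr: "over M q" "over M r" "p = g * q + r" "r = 0 \<or> degree r < degree g"
    using div_exists[OF M gM p(1)] by blast
  have "poly r a = 0" using qr(3) p(2) g by (simp add: is_minp_def)
  then have "r = 0" using qr(2,4) g by (auto simp: is_minp_def)
  then show ?thesis using qr by auto
qed

lemma alg_inverse:
  assumes a: "alg w"
  shows "\<exists>q. over \<rat> q \<and> inverse w = poly q w"
proof (cases "w = 0")
  case True
  then show ?thesis by (intro exI[of _ 0]) (simp add: over_0 subfield_Rats)
next
  case False
  obtain g where g: "is_minp \<rat> w g" using minp_exists[OF subfield_Rats a] by blast
  obtain c p1 where cp: "g = pCons c p1" by (cases g) auto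
  have gQ: "over \<rat> g" using g by (simp add: is_minp_def)
  then have cQ: "c \<in> \<rat>" and p1Q: "over \<rat> p1" using cp by (auto simp: over_pCons subfield_Rats)
  have eq: "c + w * poly p1 w = 0" using g cp by (simp add: is_minp_def)
  have "c \<noteq> 0"
  proof
    assume c0: "c = 0"
    then have "poly p1 w = 0" using eq False by simp
    moreover have "p1 \<noteq> 0" using cp c0 g by (auto simp: is_minp_def)
    moreover have "degree p1 < degree g" using cp c0 \<open>p1 \<noteq> 0\<close> by simp
    ultimately show False using g p1Q by (auto simp: is_minp_def)
  qed
  have e2: "w * poly p1 w = - c" using eq by (simp add: add_eq_0_iff)
  have "w * (- inverse c * poly p1 w) = - inverse c * (w * poly p1 w)" by (simp add: algebra_simps)
  also have "\<dots> = 1" using e2 \<open>c \<noteq> 0\<close> by simp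
  finally have "w * (- inverse c * poly p1 w) = 1" .
  then have "inverse w = poly (smult (- inverse c) p1) w"
    by (simp add: inverse_unique)
  moreover have "over \<rat> (smult (- inverse c) p1)"
    using cQ p1Q \<open>c \<noteq> 0\<close> by (intro over_smult subfield_Rats) auto
  ultimately show ?thesis by blast
qed

lemma subfield_from_alg:
  assumes "\<rat> \<subseteq> R" "\<And>x y. x \<in> R \<Longrightarrow> y \<in> R \<Longrightarrow> x + y \<in> R"
    "\<And>x y. x \<in> R \<Longrightarrow> y \<in> R \<Longrightarrow> x * y \<in> R" "\<And>x. x \<in> R \<Longrightarrow> - x \<in> R"
    "\<And>x. x \<in> R \<Longrightarrow> alg x"
  shows "subfield_C R"
  unfolding subfield_C_def
proof (intro conjI ballI impI)
  show "0 \<in> R" "1 \<in> R" using assms(1) by auto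
  fix x y assume xy: "x \<in> R" "y \<in> R"
  show "x + y \<in> R" "x * y \<in> R" using xy assms by auto
  show "x - y \<in> R" using assms(2)[OF xy(1) assms(4)[OF xy(2)]] by simp
next
  fix x assume x: "x \<in> R"
  obtain q where "over \<rat> q" "inverse x = poly q x" using alg_inverse assms(5)[OF x] by blast
  then show "inverse x \<in> R" using poly_closed[OF assms(1-3) x] by simp
qed




definition qs :: "rat \<Rightarrow> complex \<Rightarrow> complex" where "qs r z = of_rat r * z"

interpretation Q: vector_space qs
  by unfold_locales (simp_all add: qs_def algebra_simps of_rat_add of_rat_mult)

lemma finite_over_Q_span: "finite_over_Q K \<longleftrightarrow> (\<exists>B. finite B \<and> B \<subseteq> K \<and> K = Q.span B)"
proof -
  have eq: "Q.span B = {\<Sum>b\<in>B. of_rat (c b) * b | c :: complex \<Rightarrow> rat. True}" if "finite B" for B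
    using Q.span_finite[OF that] by (auto simp: qs_def)
  show ?thesis unfolding finite_over_Q_def
  proof
    assume "\<exists>B. finite B \<and> B \<subseteq> K \<and> K = {\<Sum>b\<in>B. of_rat (c b) * b | c :: complex \<Rightarrow> rat. True}"
    then obtain B where B: "finite B" "B \<subseteq> K" "K = {\<Sum>b\<in>B. of_rat (c b) * b | c :: complex \<Rightarrow> rat. True}"
      by blast
    then show "\<exists>B. finite B \<and> B \<subseteq> K \<and> K = Q.span B"
      by (intro exI[of _ B]) (simp add: eq)
  next
    assume "\<exists>B. finite B \<and> B \<subseteq> K \<and> K = Q.span B"
    then obtain B where B: "finite B" "B \<subseteq> K" "K = Q.span B"
      by blast
    then show "\<exists>B. finite B \<and> B \<subseteq> K \<and> K = {\<Sum>b\<in>B. of_rat (c b) * b | c :: complex \<Rightarrow> rat. True}"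
      by (intro exI[of _ B]) (simp add: eq)
  qed
qed

lemma subfield_subspace: "subfield_C K \<Longrightarrow> Q.subspace K"
  unfolding Q.subspace_def by (auto simp: sf_0 sf_add sf_mult sf_of_rat qs_def)

lemma alg_of_span:
  assumes B: "finite B" and pw: "\<And>i. z ^ i \<in> Q.span B"
  shows "alg z"
proof -
  define n where "n = card B"
  show ?thesis
  proof (cases "inj_on (\<lambda>i. z ^ i) {0..n}")
    case False
    have "\<exists>i\<in>{0..n}. \<exists>j\<in>{0..n}. z ^ i = z ^ j \<and> i \<noteq> j"
      using False unfolding inj_on_def by simp
    then obtain i j where ij: "i \<in> {0..n}" "j \<in> {0..n}" "i \<noteq> j" "z ^ i = z ^ j"
      by blast
    define p :: "complex poly" where "p = monom 1 i - monom 1 j"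
    have "coeff p i = 1" using ij(3) by (simp add: p_def)
    then have "p \<noteq> 0" by auto
    moreover have "poly p z = 0" unfolding p_def poly_diff poly_monom using ij(4) by simp
    moreover have "over \<rat> p" unfolding p_def
      using over_diff[OF subfield_Rats over_monom[OF subfield_Rats Rats_1] over_monom[OF subfield_Rats Rats_1]] .
    ultimately show ?thesis by (auto simp: alg_def)
  next
    case True
    define P where "P = (\<lambda>i. z ^ i) ` {0..n}"
    have cardP: "card P = Suc n" unfolding P_def using card_image[OF True] by simp
    have Psub: "P \<subseteq> Q.span B" using pw by (auto simp: P_def)
    have "Q.dependent P"
    proof (rule ccontr)
      assume "Q.independent P"
      from Q.independent_span_bound[OF B this Psub] cardP show False by (simp add: n_def)
    qed
    then obtain t u where tu: "finite t" "t \<subseteq> P" "(\<Sum>v\<in>t. qs (u v) v) = 0" "\<exists>v\<in>t. u v \<noteq> 0"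
      unfolding Q.dependent_explicit by blast
    define I where "I = {i \<in> {0..n}. z ^ i \<in> t}"
    have tI: "t = (\<lambda>i. z ^ i) ` I" using tu(2) unfolding I_def P_def by auto
    have injI: "inj_on (\<lambda>i. z ^ i) I" using True by (rule inj_on_subset) (auto simp: I_def)
    have finI: "finite I" by (simp add: I_def)
    define p :: "complex poly" where "p = (\<Sum>i\<in>I. monom (of_rat (u (z ^ i))) i)"
    have "poly p z = (\<Sum>i\<in>I. of_rat (u (z ^ i)) * z ^ i)"
      by (simp add: p_def poly_sum poly_monom)
    also have "\<dots> = (\<Sum>v\<in>t. qs (u v) v)"
      unfolding tI by (simp add: sum.reindex[OF injI] qs_def)
    also have "\<dots> = 0" by (rule tu(3))
    finally have root: "poly p z = 0" .
    have coeffp: "coeff p k = (if k \<in> I then of_rat (u (z ^ k)) else 0)" for k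
      unfolding p_def coeff_sum using finI by (simp add: if_distrib)
    from tu(4) obtain v where v: "v \<in> t" "u v \<noteq> 0" by blast
    then obtain k where k: "k \<in> I" "v = z ^ k" using tI by auto
    have "coeff p k \<noteq> 0" using k v by (simp add: coeffp)
    then have "p \<noteq> 0" by auto
    moreover have "over \<rat> p" unfolding over_def coeffp by auto
    ultimately show ?thesis using root by (auto simp: alg_def)
  qed
qed

lemma finite_subfield_alg:
  assumes "subfield_C K" "finite_over_Q K" "z \<in> K"
  shows "alg z"
proof -
  obtain B where B: "finite B" "B \<subseteq> K" "K = Q.span B" using assms(2) finite_over_Q_span by blast
  have "z ^ i \<in> Q.span B" for i using sf_power[OF assms(1,3)] B(3) by simp
  then show ?thesis by (rule alg_of_span[OF B(1)])
qed

definition prods :: "complex set \<Rightarrow> complex set \<Rightarrow> complex set" where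
  "prods A B = (\<lambda>(a, b). a * b) ` (A \<times> B)"

lemma prods_mem: "a \<in> A \<Longrightarrow> b \<in> B \<Longrightarrow> a * b \<in> prods A B"
  unfolding prods_def by force

lemma finite_prods: "finite A \<Longrightarrow> finite B \<Longrightarrow> finite (prods A B)"
  unfolding prods_def by auto

lemma mult_span:
  assumes x: "x \<in> Q.span A" and y: "y \<in> Q.span B"
  shows "x * y \<in> Q.span (prods A B)"
proof -
  have ay: "a * y \<in> Q.span (prods A B)" if a: "a \<in> A" for a
    using y
  proof (induction y rule: Q.span_induct_alt)
    case base
    then show ?case by (simp add: Q.span_zero)
  next
    case (step c b y)
    have "a * (qs c b + y) = qs c (a * b) + a * y" by (simp add: qs_def algebra_simps)
    moreover have "a * b \<in> Q.span (prods A B)" using prods_mem[OF a step(1)] by (rule Q.span_base)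
    ultimately show ?case using step(2) by (simp add: Q.span_add Q.span_scale)
  qed
  show ?thesis using x
  proof (induction x rule: Q.span_induct_alt)
    case base
    then show ?case by (simp add: Q.span_zero)
  next
    case (step c a x)
    have "(qs c a + x) * y = qs c (a * y) + x * y" by (simp add: qs_def algebra_simps)
    then show ?case using step ay by (auto intro!: Q.span_add Q.span_scale)
  qed
qed

definition genf :: "complex set \<Rightarrow> complex set" where
  "genf A = \<Inter> {L. subfield_C L \<and> A \<subseteq> L}"

lemma genf_subfield: "subfield_C (genf A)"
  unfolding genf_def by (rule subfield_Inter) auto

lemma genf_sup: "A \<subseteq> genf A"
  unfolding genf_def by auto

lemma genf_least: "subfield_C L \<Longrightarrow> A \<subseteq> L \<Longrightarrow> genf A \<subseteq> L"
  unfolding genf_def by auto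

lemma genf_mono: "A \<subseteq> B \<Longrightarrow> genf A \<subseteq> genf B"
  unfolding genf_def by blast

lemma genf_Un: "genf (A \<union> B) = genf (genf A \<union> B)"
proof
  have "A \<union> B \<subseteq> genf A \<union> B" using genf_sup[of A] by blast
  then show "genf (A \<union> B) \<subseteq> genf (genf A \<union> B)" by (rule genf_mono)
  have "genf A \<subseteq> genf (A \<union> B)" by (rule genf_mono) blast
  moreover have "B \<subseteq> genf (A \<union> B)" using genf_sup[of "A \<union> B"] by blast
  ultimately show "genf (genf A \<union> B) \<subseteq> genf (A \<union> B)"
    by (intro genf_least genf_subfield) blast
qed

lemma compositum_genf: "compositum A B = genf (A \<union> B)"
  unfolding compositum_def genf_def by auto

lemma comp2:
  assumes K1: "subfield_C K1" "finite B1" "B1 \<subseteq> K1" "K1 = Q.span B1"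
    and K2: "subfield_C K2" "finite B2" "B2 \<subseteq> K2" "K2 = Q.span B2"
  shows "genf (K1 \<union> K2) = Q.span (prods B1 B2) \<and> subfield_C (Q.span (prods B1 B2))"
proof -
  define V where "V = Q.span (prods B1 B2)"
  have mK: "k1 * k2 \<in> V" if "k1 \<in> K1" "k2 \<in> K2" for k1 k2
    unfolding V_def using mult_span that K1(4) K2(4) by blast
  have one1: "1 \<in> K1" and one2: "1 \<in> K2" using K1(1) K2(1) by (auto simp: sf_1)
  have Vmult: "x * y \<in> V" if "x \<in> V" "y \<in> V" for x y
  proof -
    have "x * y \<in> Q.span (prods (prods B1 B2) (prods B1 B2))"
      using mult_span that unfolding V_def by blast
    moreover have "prods (prods B1 B2) (prods B1 B2) \<subseteq> V"
    proof
      fix w assume "w \<in> prods (prods B1 B2) (prods B1 B2)"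
      then obtain a b c d where abcd: "a \<in> B1" "b \<in> B2" "c \<in> B1" "d \<in> B2" "w = (a * b) * (c * d)"
        unfolding prods_def by auto
      then have "w = (a * c) * (b * d)" by (simp add: algebra_simps)
      moreover have "a * c \<in> K1" using abcd K1 by (auto intro!: sf_mult)
      moreover have "b * d \<in> K2" using abcd K2 by (auto intro!: sf_mult)
      ultimately show "w \<in> V" using mK by auto
    qed
    then have "Q.span (prods (prods B1 B2) (prods B1 B2)) \<subseteq> Q.span V" by (rule Q.span_mono)
    moreover have "Q.span V = V" unfolding V_def by (rule Q.span_span)
    ultimately show ?thesis by blast
  qed
  have one: "1 \<in> V" using mK[OF one1 one2] by simp
  have pw: "z ^ i \<in> V" if "z \<in> V" for z i
    by (induction i) (auto simp: one Vmult that)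
  have finP: "finite (prods B1 B2)" using K1(2) K2(2) by (rule finite_prods)
  have Vsub: "subfield_C V"
  proof (rule subfield_from_alg)
    show "\<rat> \<subseteq> V"
    proof
      fix q :: complex assume "q \<in> \<rat>"
      then have "q \<in> K1" using sf_Rats K1(1) by blast
      then show "q \<in> V" using mK[OF _ one2] by fastforce
    qed
    show "x + y \<in> V" if "x \<in> V" "y \<in> V" for x y using that by (simp add: V_def Q.span_add)
    show "x * y \<in> V" if "x \<in> V" "y \<in> V" for x y using that by (rule Vmult)
    show "- x \<in> V" if "x \<in> V" for x using that by (simp add: V_def Q.span_neg)
    show "alg x" if "x \<in> V" for x using alg_of_span[OF finP] pw[OF that] unfolding V_def by blast
  qed
  have K1V: "K1 \<subseteq> V" using mK[OF _ one2] by fastforce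
  have K2V: "K2 \<subseteq> V" using mK[OF one1] by fastforce
  have "genf (K1 \<union> K2) \<subseteq> V" using genf_least[OF Vsub] K1V K2V by blast
  moreover have "V \<subseteq> genf (K1 \<union> K2)"
  proof -
    have "prods B1 B2 \<subseteq> genf (K1 \<union> K2)"
      using genf_sup[of "K1 \<union> K2"] K1(3) K2(3) genf_subfield
      by (auto simp: prods_def intro!: sf_mult)
    then show ?thesis unfolding V_def
      by (intro Q.span_minimal subfield_subspace genf_subfield)
  qed
  ultimately show ?thesis using Vsub unfolding V_def by blast
qed

lemma comp2_finite:
  assumes "subfield_C K1" "finite_over_Q K1" "subfield_C K2" "finite_over_Q K2"
  shows "subfield_C (genf (K1 \<union> K2)) \<and> finite_over_Q (genf (K1 \<union> K2))"
proof -
  obtain B1 where B1: "finite B1" "B1 \<subseteq> K1" "K1 = Q.span B1" using assms(2) finite_over_Q_span by blast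
  obtain B2 where B2: "finite B2" "B2 \<subseteq> K2" "K2 = Q.span B2" using assms(4) finite_over_Q_span by blast
  have c: "genf (K1 \<union> K2) = Q.span (prods B1 B2)" using comp2[OF assms(1) B1 assms(3) B2] by blast
  have "prods B1 B2 \<subseteq> Q.span (prods B1 B2)" by (rule Q.span_superset)
  then show ?thesis unfolding finite_over_Q_span using c finite_prods[OF B1(1) B2(1)] genf_subfield
    by (intro conjI genf_subfield exI[of _ "prods B1 B2"]) auto
qed




definition adj :: "complex set \<Rightarrow> complex \<Rightarrow> complex set" where
  "adj M a = {poly p a | p. over M p}"

lemma adj_memI: "over M p \<Longrightarrow> poly p a \<in> adj M a"
  unfolding adj_def by blast

lemma adj_memE: "w \<in> adj M a \<Longrightarrow> (\<And>p. over M p \<Longrightarrow> w = poly p a \<Longrightarrow> P) \<Longrightarrow> P"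
  unfolding adj_def by blast

lemma adj_base: "subfield_C M \<Longrightarrow> x \<in> M \<Longrightarrow> x \<in> adj M a"
  using adj_memI[OF over_const, of M x a] by simp

lemma adj_gen: "subfield_C M \<Longrightarrow> a \<in> adj M a"
  using adj_memI[OF over_pX, of M a] by simp

lemma adj_add: "subfield_C M \<Longrightarrow> x \<in> adj M a \<Longrightarrow> y \<in> adj M a \<Longrightarrow> x + y \<in> adj M a"
  by (metis adj_memE adj_memI over_add poly_add)

lemma adj_mult: "subfield_C M \<Longrightarrow> x \<in> adj M a \<Longrightarrow> y \<in> adj M a \<Longrightarrow> x * y \<in> adj M a"
  by (metis adj_memE adj_memI over_mult poly_mult)

lemma adj_uminus: "subfield_C M \<Longrightarrow> x \<in> adj M a \<Longrightarrow> - x \<in> adj M a"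
proof -
  assume M: "subfield_C M" and x: "x \<in> adj M a"
  from x obtain p where p: "over M p" "x = poly p a" by (rule adj_memE)
  have "over M (0 - p)" using M p by (intro over_diff over_0)
  moreover have "poly (0 - p) a = - x" using p by simp
  ultimately show ?thesis using adj_memI by metis
qed

lemma adj_subset: "subfield_C L \<Longrightarrow> M \<subseteq> L \<Longrightarrow> a \<in> L \<Longrightarrow> adj M a \<subseteq> L"
  by (auto elim!: adj_memE intro!: poly_in_sf dest: over_mono)

lemma adj_subfield:
  assumes M: "subfield_C M" and al: "\<And>w. w \<in> adj M a \<Longrightarrow> alg w"
  shows "subfield_C (adj M a)"
proof (rule subfield_from_alg)
  show "\<rat> \<subseteq> adj M a" using sf_Rats[OF M] adj_base[OF M] by blast
qed (use M al adj_add adj_mult adj_uminus in auto)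

lemma ext_step:
  assumes M: "subfield_C M" and t: "hom_on M t" and g: "is_minp M a g"
    and b: "poly (map_poly t g) b = 0"
  shows "\<exists>t'. hom_on (adj M a) t' \<and> (\<forall>x\<in>M. t' x = t x) \<and> t' a = b"
proof -
  define rep where "rep w = (SOME p. over M p \<and> poly p a = w)" for w
  define t' where "t' w = poly (map_poly t (rep w)) b" for w
  have key: "t' (poly p a) = poly (map_poly t p) b" if p: "over M p" for p
  proof -
    define r where "r = rep (poly p a)"
    have "\<exists>q. over M q \<and> poly q a = poly p a" using p by blast
    then have r: "over M r" "poly r a = poly p a" unfolding r_def rep_def by (metis (mono_tags, lifting) someI_ex)+
    have dM: "over M (r - p)" using r p M by (intro over_diff)
    have "poly (r - p) a = 0" using r by simp
    then obtain h where h: "over M h" "r - p = g * h" using minp_dvd[OF M g dM] by blast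
    have gM: "over M g" using g by (simp add: is_minp_def)
    have "map_poly t r - map_poly t p = map_poly t (r - p)"
      using map_hom_diff[OF t M r(1) p] by simp
    also have "\<dots> = map_poly t g * map_poly t h" using h map_hom_mult[OF t M gM h(1)] by simp
    finally have "poly (map_poly t r) b - poly (map_poly t p) b = 0" using b
      by (metis mult_zero_left poly_diff poly_mult)
    then show ?thesis unfolding t'_def r_def by simp
  qed
  have hom: "hom_on (adj M a) t'"
    unfolding hom_on_def
  proof (intro conjI ballI)
    have "t' (poly [:1:] a) = poly (map_poly t [:1:]) b" by (rule key[OF over_const[OF M sf_1[OF M]]])
    then show "t' 1 = 1" using map_hom_const[OF t M] hom_1[OF t] by simp
  next
    fix x y assume x: "x \<in> adj M a" and y: "y \<in> adj M a"
    obtain p where p: "over M p" "x = poly p a" using x by (rule adj_memE)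
    obtain q where q: "over M q" "y = poly q a" using y by (rule adj_memE)
    have "t' (x + y) = t' (poly (p + q) a)" using p q by simp
    also have "\<dots> = poly (map_poly t (p + q)) b" by (rule key[OF over_add[OF M p(1) q(1)]])
    also have "\<dots> = t' x + t' y" using key[OF p(1)] key[OF q(1)] p q map_hom_add[OF t M p(1) q(1)] by simp
    finally show "t' (x + y) = t' x + t' y" .
    have "t' (x * y) = t' (poly (p * q) a)" using p q by simp
    also have "\<dots> = poly (map_poly t (p * q)) b" by (rule key[OF over_mult[OF M p(1) q(1)]])
    also have "\<dots> = t' x * t' y" using key[OF p(1)] key[OF q(1)] p q map_hom_mult[OF t M p(1) q(1)] by simp
    finally show "t' (x * y) = t' x * t' y" .
  qed
  have ext: "t' x = t x" if x: "x \<in> M" for x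
  proof -
    have "t' (poly [:x:] a) = poly (map_poly t [:x:]) b" by (rule key[OF over_const[OF M x]])
    then show ?thesis using map_hom_const[OF t M] by simp
  qed
  have "t' (poly [:0, 1:] a) = poly (map_poly t [:0, 1:]) b" by (rule key[OF over_pX[OF M]])
  then have "t' a = b" using map_hom_pX[OF t M] by simp
  then show ?thesis using hom ext by blast
qed

lemma minp_map_root:
  assumes M: "subfield_C M" and t: "hom_on M t" and g: "is_minp M a g"
  shows "\<exists>b. poly (map_poly t g) b = 0"
proof -
  have "coeff (map_poly t g) (degree g) = 1"
    using g hom_1[OF t] by (simp add: coeff_map_hom[OF t M] is_minp_def)
  then have "degree (map_poly t g) \<ge> degree g" by (metis le_degree one_neq_zero)
  then have "degree (map_poly t g) \<noteq> 0" using minp_degree[OF g] by simp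
  then have "\<not> constant (poly (map_poly t g))" by (simp add: constant_degree)
  then show ?thesis using fundamental_theorem_of_algebra by blast
qed

lemma ext_all:
  assumes L: "subfield_C L" "finite B" "B \<subseteq> L" "L = Q.span B"
  shows "subfield_C M \<Longrightarrow> M \<subseteq> L \<Longrightarrow> hom_on M t \<Longrightarrow> \<exists>s. hom_on L s \<and> (\<forall>x\<in>M. s x = t x)"
proof (induction "card (B - M)" arbitrary: M t rule: less_induct)
  case less
  have finL: "finite_over_Q L" using L finite_over_Q_span by blast
  show ?case
  proof (cases "B \<subseteq> M")
    case True
    then have "L \<subseteq> M" using L(4) Q.span_minimal subfield_subspace[OF less.prems(1)] by blast
    then have "L = M" using less.prems(2) by blast
    then show ?thesis using less.prems(3) by blast
  next
    case False
    then obtain c where c: "c \<in> B" "c \<notin> M" by blast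
    have cL: "c \<in> L" using c L(3) by blast
    have algc: "alg c" using finite_subfield_alg[OF L(1) finL cL] .
    obtain g where g: "is_minp M c g" using minp_exists[OF less.prems(1) algc] by blast
    obtain b where b: "poly (map_poly t g) b = 0" using minp_map_root[OF less.prems(1,3) g] by blast
    define M' where "M' = adj M c"
    have M'L: "M' \<subseteq> L" unfolding M'_def using adj_subset[OF L(1) less.prems(2) cL] .
    have M'sf: "subfield_C M'" unfolding M'_def
      using adj_subfield[OF less.prems(1)] finite_subfield_alg[OF L(1) finL] M'L unfolding M'_def by blast
    obtain t' where t': "hom_on M' t'" "\<forall>x\<in>M. t' x = t x"
      using ext_step[OF less.prems(1,3) g b] unfolding M'_def by blast
    have MM': "M \<subseteq> M'" unfolding M'_def using adj_base[OF less.prems(1)] by blast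
    have cM': "c \<in> M'" unfolding M'_def using adj_gen[OF less.prems(1)] .
    have "B - M' \<subset> B - M" using MM' cM' c by blast
    then have "card (B - M') < card (B - M)" using L(2) by (meson finite_Diff psubset_card_mono)
    from less.hyps[OF this M'sf M'L t'(1)] obtain s where s: "hom_on L s" "\<forall>x\<in>M'. s x = t' x" by blast
    have "\<forall>x\<in>M. s x = t x" using s(2) t'(2) MM' by auto
    then show ?thesis using s(1) by blast
  qed
qed

lemma emb_exists:
  assumes L: "subfield_C L" "finite_over_Q L" and z: "z \<in> L" and g: "is_minp \<rat> z g"
    and y: "poly g y = 0"
  shows "\<exists>s. hom_on L s \<and> s z = y"
proof -
  obtain B where B: "finite B" "B \<subseteq> L" "L = Q.span B" using L(2) finite_over_Q_span by blast
  have QL: "\<rat> \<subseteq> L" using sf_Rats[OF L(1)] by blast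
  define M where "M = adj \<rat> z"
  have MsubL: "M \<subseteq> L" unfolding M_def using adj_subset[OF L(1) QL z] .
  have Msf: "subfield_C M" unfolding M_def
    using adj_subfield[OF subfield_Rats] finite_subfield_alg[OF L] MsubL unfolding M_def by blast
  have "poly (map_poly id g) y = 0" using y by simp
  from ext_step[OF subfield_Rats hom_on_id g this] obtain t where
    t: "hom_on M t" "t z = y" unfolding M_def by blast
  from ext_all[OF L(1) B Msf MsubL t(1)] obtain s where "hom_on L s" "\<forall>x\<in>M. s x = t x" by blast
  moreover have "z \<in> M" unfolding M_def by (rule adj_gen[OF subfield_Rats])
  ultimately show ?thesis using t(2) by auto
qed




abbreviation mr :: "rat poly \<Rightarrow> complex poly" where "mr p \<equiv> map_poly of_rat p"

lemma coeff_mr: "coeff (mr p) i = of_rat (coeff p i)"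
  by (simp add: coeff_map_poly)

lemma mr_mult: "mr (a * b) = mr a * mr b"
  by (rule poly_eqI) (simp add: coeff_mr coeff_mult of_rat_sum of_rat_mult)

lemma mr_inj: "mr a = mr b \<Longrightarrow> a = b"
  by (rule poly_eqI) (metis coeff_mr of_rat_eq_iff)

lemma mr_degree: "degree (mr p) = degree p"
  by (rule degree_map_poly) simp

lemma mr_0_iff: "mr p = 0 \<longleftrightarrow> p = 0"
  using mr_inj[of p 0] by auto

lemma over_mr: "over \<rat> (mr p)"
  by (simp add: over_def coeff_mr)

lemma over_Rats_mr: "over \<rat> g \<Longrightarrow> \<exists>g0. g = mr g0"
  using ratpolyE[of g] by (metis over_coeff)

lemma minp_irred:
  assumes g: "is_minp \<rat> z g" and g0: "g = mr g0"
  shows "irreducible g0"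
proof (rule irreducibleI)
  show "g0 \<noteq> 0" using minp_nonzero[OF g] g0 by auto
  show "\<not> g0 dvd 1"
    using minp_degree[OF g] g0 mr_degree[of g0] is_unit_iff_degree[OF \<open>g0 \<noteq> 0\<close>] by simp
  fix a b assume ab: "g0 = a * b"
  have a0: "a \<noteq> 0" and b0: "b \<noteq> 0" using ab \<open>g0 \<noteq> 0\<close> by auto
  have "poly (mr a) z * poly (mr b) z = 0" using g g0 ab by (simp add: is_minp_def mr_mult)
  then have disj: "poly (mr a) z = 0 \<or> poly (mr b) z = 0" by simp
  have dg: "degree g0 = degree a + degree b" using ab a0 b0 by (simp add: degree_mult_eq)
  from disj have "degree a = 0 \<or> degree b = 0"
  proof
    assume "poly (mr a) z = 0"
    then have "degree g \<le> degree (mr a)" using g a0 over_mr[of a] mr_0_iff[of a] by (auto simp: is_minp_def)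
    then show ?thesis using dg g0 mr_degree by simp
  next
    assume "poly (mr b) z = 0"
    then have "degree g \<le> degree (mr b)" using g b0 over_mr[of b] mr_0_iff[of b] by (auto simp: is_minp_def)
    then show ?thesis using dg g0 mr_degree by simp
  qed
  then show "a dvd 1 \<or> b dvd 1" using a0 b0 is_unit_iff_degree by blast
qed

lemma irred_root_minp:
  assumes p: "irreducible p" "poly (mr p) z = 0" and g: "is_minp \<rat> z g" and y: "poly (mr p) y = 0"
  shows "poly g y = 0"
proof -
  obtain h where h: "over \<rat> h" "mr p = g * h" using minp_dvd[OF subfield_Rats g over_mr p(2)] by blast
  obtain g0 where g0: "g = mr g0" using over_Rats_mr g by (auto simp: is_minp_def)
  obtain h0 where h0: "h = mr h0" using over_Rats_mr h(1) by blast
  have "mr p = mr (g0 * h0)" using h g0 h0 by (simp add: mr_mult)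
  then have pe: "p = g0 * h0" by (rule mr_inj)
  have g0nu: "\<not> g0 dvd 1"
    using minp_irred[OF g g0] by (simp add: irreducible_def)
  then have "h0 dvd 1" using irreducibleD[OF p(1) pe] by blast
  moreover have "h0 \<noteq> 0" using pe p(1) by auto
  ultimately have "degree h0 = 0" using is_unit_iff_degree by blast
  then have "h0 = [:coeff h0 0:]" by (metis degree_0_id)
  moreover have "poly (mr [:coeff h0 0:]) y = of_rat (coeff h0 0)" by (simp add: map_poly_pCons)
  ultimately have "poly h y = of_rat (coeff h0 0)" using h0 by metis
  moreover have "coeff h0 0 \<noteq> 0" using \<open>h0 \<noteq> 0\<close> \<open>h0 = [:coeff h0 0:]\<close> by (metis pCons_0_0)
  ultimately have "poly h y \<noteq> 0" by simp
  moreover have "poly g y * poly h y = 0" using y h(2) by (metis poly_mult)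
  ultimately show ?thesis by simp
qed

lemma alg_irred: "alg z \<Longrightarrow> \<exists>p. irreducible p \<and> poly (mr p) z = 0"
proof -
  assume "alg z"
  then obtain g where g: "is_minp \<rat> z g" using minp_exists[OF subfield_Rats] by blast
  then obtain g0 where g0: "g = mr g0" using over_Rats_mr by (auto simp: is_minp_def)
  have "poly (mr g0) z = 0" using g g0 by (simp add: is_minp_def)
  then show ?thesis using minp_irred[OF g g0] by blast
qed

section \<open>Normal fields\<close>

lemma galois_sf: "finite_galois_over_Q K \<Longrightarrow> subfield_C K"
  by (simp add: finite_galois_over_Q_def)
lemma galois_fin: "finite_galois_over_Q K \<Longrightarrow> finite_over_Q K"
  by (simp add: finite_galois_over_Q_def)
lemma galois_alg: "finite_galois_over_Q K \<Longrightarrow> z \<in> K \<Longrightarrow> alg z"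
  using finite_subfield_alg galois_sf galois_fin by blast
lemma galois_root: "finite_galois_over_Q K \<Longrightarrow> z \<in> K \<Longrightarrow> irreducible p \<Longrightarrow> poly (mr p) z = 0 \<Longrightarrow>
  poly (mr p) y = 0 \<Longrightarrow> y \<in> K"
  unfolding finite_galois_over_Q_def normal_over_Q_def by blast

lemma hom_maps:
  assumes K: "finite_galois_over_Q K" and s: "hom_on K s" and z: "z \<in> K"
  shows "s z \<in> K"
proof -
  obtain p where p: "irreducible p" "poly (mr p) z = 0" using alg_irred[OF galois_alg[OF K z]] by blast
  have "poly (mr p) (s z) = s (poly (mr p) z)" using poly_hom_Rats[OF s galois_sf[OF K] over_mr z] .
  also have "\<dots> = 0" using p(2) hom_0[OF s galois_sf[OF K]] by simp
  finally show ?thesis using galois_root[OF K z p] by blast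
qed

lemma hom_bij:
  assumes K: "finite_galois_over_Q K" and s: "hom_on K s"
  shows "bij_betw s K K"
proof -
  have sf: "subfield_C K" using galois_sf[OF K] .
  have inj: "inj_on s K" using hom_inj[OF s sf] .
  have "K \<subseteq> s ` K"
  proof
    fix k assume k: "k \<in> K"
    obtain p where p: "irreducible p" "poly (mr p) k = 0" using alg_irred[OF galois_alg[OF K k]] by blast
    define R where "R = {y. poly (mr p) y = 0}"
    have "mr p \<noteq> 0" using p(1) mr_0_iff by auto
    then have finR: "finite R" unfolding R_def by (rule poly_roots_finite)
    have RK: "R \<subseteq> K" unfolding R_def using galois_root[OF K k p] by blast
    have "s ` R \<subseteq> R"
    proof
      fix w assume "w \<in> s ` R"
      then obtain r where r: "r \<in> R" "w = s r" by blast
      have "poly (mr p) (s r) = s (poly (mr p) r)" using poly_hom_Rats[OF s sf over_mr] r RK by blast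
      also have "\<dots> = 0" using r(1) hom_0[OF s sf] by (simp add: R_def)
      finally show "w \<in> R" using r by (simp add: R_def)
    qed
    moreover have "inj_on s R" using inj RK by (rule inj_on_subset)
    ultimately have "s ` R = R" using finR endo_inj_surj by blast
    moreover have "k \<in> R" using p(2) by (simp add: R_def)
    ultimately show "k \<in> s ` K" using RK by blast
  qed
  moreover have "s ` K \<subseteq> K" using hom_maps[OF K s] by blast
  ultimately show ?thesis using inj by (simp add: bij_betw_def)
qed

lemma hom_aut: "finite_galois_over_Q K \<Longrightarrow> hom_on K s \<Longrightarrow> s \<in> field_auts K"
  unfolding field_auts_def using hom_bij[of K s] by (auto simp: hom_on_def)

lemma cnj_aut: "finite_galois_over_Q K \<Longrightarrow> cnj \<in> field_auts K"
  using hom_aut hom_on_cnj by blast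

lemma preimage_subfield:
  assumes L: "subfield_C L" and s: "hom_on L s"
  shows "subfield_C {w \<in> L. s w \<in> L}"
  unfolding subfield_C_def
proof (intro conjI ballI impI)
  show "0 \<in> {w \<in> L. s w \<in> L}" using hom_0[OF s L] sf_0[OF L] by simp
  show "1 \<in> {w \<in> L. s w \<in> L}" using hom_1[OF s] sf_1[OF L] by simp
  fix x y assume x: "x \<in> {w \<in> L. s w \<in> L}" and y: "y \<in> {w \<in> L. s w \<in> L}"
  then show "x + y \<in> {w \<in> L. s w \<in> L}" "x - y \<in> {w \<in> L. s w \<in> L}" "x * y \<in> {w \<in> L. s w \<in> L}"
    using hom_add[OF s] hom_diff[OF s L] hom_mult[OF s] sf_add[OF L] sf_diff[OF L] sf_mult[OF L] by auto
next
  fix x assume x: "x \<in> {w \<in> L. s w \<in> L}"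
  then show "inverse x \<in> {w \<in> L. s w \<in> L}"
    using hom_inverse[OF s L] sf_inverse[OF L] by auto
qed

lemma comp2_galois:
  assumes K1: "finite_galois_over_Q K1" and K2: "finite_galois_over_Q K2"
  shows "finite_galois_over_Q (genf (K1 \<union> K2))"
proof -
  define L where "L = genf (K1 \<union> K2)"
  have L: "subfield_C L" "finite_over_Q L"
    using comp2_finite[OF galois_sf[OF K1] galois_fin[OF K1] galois_sf[OF K2] galois_fin[OF K2]]
    unfolding L_def by auto
  have "normal_over_Q L"
    unfolding normal_over_Q_def
  proof (intro ballI allI impI)
    fix x p y assume x: "x \<in> L" and p: "irreducible p \<and> poly (mr p) x = 0" and y: "poly (mr p) y = 0"
    obtain g where g: "is_minp \<rat> x g" using minp_exists[OF subfield_Rats finite_subfield_alg[OF L x]] by blast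
    have "poly g y = 0" using irred_root_minp[OF conjunct1[OF p] conjunct2[OF p] g y] .
    then obtain s where s: "hom_on L s" "s x = y" using emb_exists[OF L x g] by blast
    have K1L: "K1 \<subseteq> L" and K2L: "K2 \<subseteq> L" using genf_sup[of "K1 \<union> K2"] unfolding L_def by auto
    have "K1 \<union> K2 \<subseteq> {w \<in> L. s w \<in> L}"
      using hom_maps[OF K1 hom_on_subset[OF s(1) K1L]] hom_maps[OF K2 hom_on_subset[OF s(1) K2L]] K1L K2L
      by blast
    then have "L \<subseteq> {w \<in> L. s w \<in> L}" unfolding L_def
      by (intro genf_least preimage_subfield[OF L(1) s(1), unfolded L_def])
    then show "y \<in> L" using x s(2) by blast
  qed
  then show ?thesis using L unfolding L_def finite_galois_over_Q_def by blast
qed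




lemma rat_power_dvd:
  fixes a :: int and q :: rat and m k :: nat
  assumes sq: "squarefree a" and a1: "a \<noteq> 1" and a2: "a \<noteq> -1" and m: "m > 0"
    and eq: "q ^ m = of_int (a ^ k)"
  shows "m dvd k"
proof -
  have a0: "a \<noteq> 0" using sq by auto
  obtain u v where uv: "quotient_of q = (u, v)" by (cases "quotient_of q")
  have v: "v > 0" using quotient_of_denom_pos[OF uv] .
  have qd: "q = of_int u / of_int v" using quotient_of_div[OF uv] .
  have "(of_int u / of_int v) ^ m = (of_int (a ^ k) :: rat)" using eq qd by simp
  then have "(of_int u) ^ m = (of_int (a ^ k) :: rat) * (of_int v) ^ m"
    using v by (simp add: power_divide field_simps)
  then have "of_int (u ^ m) = (of_int (a ^ k * v ^ m) :: rat)" by simp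
  then have ueq: "u ^ m = a ^ k * v ^ m" using of_int_eq_iff by blast
  have nz: "a ^ k * v ^ m \<noteq> 0" using a0 v by simp
  have u0: "u \<noteq> 0"
  proof
    assume "u = 0"
    then have "u ^ m = 0" using m by simp
    then show False using ueq nz by simp
  qed
  have "\<not> is_unit a" using a1 a2 by auto
  then obtain p where p: "p dvd a" "prime p" using prime_divisor_exists[OF a0] by blast
  have "p \<in> prime_factors a" using p a0 by (simp add: in_prime_factors_iff)
  then have mp: "multiplicity p a = 1" using squarefree_factorial_semiring'[OF a0] sq by blast
  have pe: "prime_elem p" using p(2) unfolding prime_def by blast
  have "multiplicity p (u ^ m) = m * multiplicity p u"
    using prime_elem_multiplicity_power_distrib[OF pe u0] .
  moreover have "multiplicity p (a ^ k * v ^ m) = k + m * multiplicity p v"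
    using prime_elem_multiplicity_mult_distrib[OF pe] prime_elem_multiplicity_power_distrib[OF pe] a0 v mp
    by simp
  ultimately have "m * multiplicity p u = k + m * multiplicity p v" using ueq by simp
  then have "k = m * (multiplicity p u - multiplicity p v)" by (simp add: diff_mult_distrib2)
  then show ?thesis by simp
qed

lemma coeff_linear_power_pred:
  "coeff ([:c, 1:] ^ Suc n) n = of_nat (Suc n) * (c :: complex)"
proof (induction n)
  case 0
  then show ?case by simp
next
  case (Suc n)
  define q where "q = [:c, 1:] ^ Suc n"
  have "[:c, 1:] ^ Suc (Suc n) = [:c, 1:] * q" unfolding q_def by (simp only: power_Suc)
  also have "\<dots> = smult c q + pCons 0 q" by (simp add: mult_pCons_left)
  finally have e: "coeff ([:c, 1:] ^ Suc (Suc n)) (Suc n) = c * coeff q (Suc n) + coeff q n"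
    by simp
  have q1: "coeff q (Suc n) = 1" unfolding q_def by (rule coeff_linear_power)
  have q2: "coeff q n = of_nat (Suc n) * c" unfolding q_def by (rule Suc.IH)
  show ?case unfolding e q1 q2 by (simp add: algebra_simps)
qed

lemma monic_single_root:
  fixes g :: "complex poly"
  shows "lead_coeff g = 1 \<Longrightarrow> (\<And>y. poly g y = 0 \<Longrightarrow> y = c) \<Longrightarrow> g = [:- c, 1:] ^ degree g"
proof (induction "degree g" arbitrary: g)
  case 0
  then have "g = [:lead_coeff g:]" by (metis degree_0_id)
  then have "g = 1" using 0(2) by (simp add: one_pCons)
  then show ?case by simp
next
  case (Suc n)
  have "\<not> constant (poly g)" using Suc(2) by (simp add: constant_degree)
  then obtain y where "poly g y = 0" using fundamental_theorem_of_algebra by blast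
  then have "poly g c = 0" using Suc(4) by metis
  then have "[:- c, 1:] dvd g" by (simp add: poly_eq_0_iff_dvd)
  then obtain g' where g': "g = [:- c, 1:] * g'" by (rule dvdE)
  have g'0: "g' \<noteq> 0"
  proof
    assume "g' = 0"
    then have "g = 0" using g' by (simp only: mult_zero_right)
    then show False using Suc(3) by simp
  qed
  have e: "degree ([:- c, 1:] * g') = degree [:- c, 1:] + degree g'"
    by (rule degree_mult_eq) (auto simp: g'0)
  have dg: "degree g' = n" using e Suc(2) unfolding g'[symmetric] by simp
  have e2: "lead_coeff ([:- c, 1:] * g') = lead_coeff [:- c, 1:] * lead_coeff g'"
    by (rule lead_coeff_mult)
  have lg: "lead_coeff g' = 1" using e2 Suc(3) unfolding g'[symmetric] by simp
  have roots: "y = c" if "poly g' y = 0" for y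
  proof -
    have "poly g y = 0" unfolding g' poly_mult using that by (simp only: mult_zero_right)
    then show ?thesis using Suc(4) by blast
  qed
  have "g' = [:- c, 1:] ^ degree g'" using Suc(1)[OF dg[symmetric] lg] roots by blast
  then have "g = [:- c, 1:] * [:- c, 1:] ^ n" using g' dg by (simp only:)
  then have "g = [:- c, 1:] ^ Suc n" by (simp only: power_Suc)
  then show ?case unfolding Suc(2)[symmetric] .
qed

lemma fixed_rat:
  assumes L: "subfield_C L" "finite_over_Q L" and z: "z \<in> L"
    and fx: "\<And>s. hom_on L s \<Longrightarrow> s z = z"
  shows "z \<in> \<rat>"
proof -
  obtain g where g: "is_minp \<rat> z g" using minp_exists[OF subfield_Rats finite_subfield_alg[OF L z]] by blast
  have roots: "y = z" if "poly g y = 0" for y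
    using emb_exists[OF L z g that] fx by metis
  define d where "d = degree g"
  have d1: "d \<ge> 1" using minp_degree[OF g] by (simp add: d_def)
  have "g = [:- z, 1:] ^ d" unfolding d_def using monic_single_root[of g z] g roots by (auto simp: is_minp_def)
  then obtain n where n: "d = Suc n" "g = [:- z, 1:] ^ Suc n" using d1 by (cases d) auto
  have "coeff g n = coeff ([:- z, 1:] ^ Suc n) n" using n(2) by (simp only:)
  also have "\<dots> = of_nat (Suc n) * (- z)" by (rule coeff_linear_power_pred)
  finally have "coeff g n = of_nat (Suc n) * (- z)" .
  moreover have "coeff g n \<in> \<rat>" using g by (simp add: is_minp_def over_coeff)
  ultimately have "of_nat (Suc n) * (- z) \<in> \<rat>" by simp
  then have w: "of_nat (Suc n) * z \<in> \<rat>" by simp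
  have nz: "(of_nat (Suc n) :: complex) \<noteq> 0" by (simp del: of_nat_Suc)
  have "(of_nat (Suc n) * z) / of_nat (Suc n) \<in> \<rat>" by (rule Rats_divide[OF w Rats_of_nat])
  then show ?thesis using nz by simp
qed

lemma hom_inv:
  assumes L: "subfield_C L" and s: "hom_on L s" and b: "bij_betw s L L"
  shows "hom_on L (inv_into L s)"
proof -
  have inj: "inj_on s L" and im: "s ` L = L" using b by (auto simp: bij_betw_def)
  have e: "inv_into L s (s x) = x" if "x \<in> L" for x using inj that by simp
  show ?thesis unfolding hom_on_def
  proof (intro conjI ballI)
    show "inv_into L s 1 = 1" using e[OF sf_1[OF L]] hom_1[OF s] by simp
  next
    fix x y assume x: "x \<in> L" and y: "y \<in> L"
    obtain x' where x': "x' \<in> L" "x = s x'" using x im by auto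
    obtain y' where y': "y' \<in> L" "y = s y'" using y im by auto
    have "x + y = s (x' + y')" using x' y' hom_add[OF s] by simp
    then show "inv_into L s (x + y) = inv_into L s x + inv_into L s y"
      using e x' y' sf_add[OF L] by simp
    have "x * y = s (x' * y')" using x' y' hom_mult[OF s] by simp
    then show "inv_into L s (x * y) = inv_into L s x * inv_into L s y"
      using e x' y' sf_mult[OF L] by simp
  qed
qed

lemma hom_comp:
  assumes K: "finite_galois_over_Q L" and s: "hom_on L s" and t: "hom_on L t"
  shows "hom_on L (s \<circ> t)"
  unfolding hom_on_def
proof (intro conjI ballI)
  show "(s \<circ> t) 1 = 1" using hom_1[OF s] hom_1[OF t] by simp
  fix x y assume x: "x \<in> L" and y: "y \<in> L"
  have tx: "t x \<in> L" and ty: "t y \<in> L" using hom_maps[OF K t] x y by auto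
  show "(s \<circ> t) (x + y) = (s \<circ> t) x + (s \<circ> t) y"
    using hom_add[OF t x y] hom_add[OF s tx ty] by simp
  show "(s \<circ> t) (x * y) = (s \<circ> t) x * (s \<circ> t) y"
    using hom_mult[OF t x y] hom_mult[OF s tx ty] by simp
qed

lemma hom_span:
  assumes L: "subfield_C L" and s: "hom_on L s" and B: "B \<subseteq> L"
  shows "s (\<Sum>b\<in>B. of_rat (c b) * b) = (\<Sum>b\<in>B. of_rat (c b) * s b)"
proof -
  have "s (\<Sum>b\<in>B. of_rat (c b) * b) = (\<Sum>b\<in>B. s (of_rat (c b) * b))"
    using B by (intro hom_sum[OF s L]) (auto intro!: sf_mult sf_of_rat L)
  also have "\<dots> = (\<Sum>b\<in>B. of_rat (c b) * s b)"
    using B by (intro sum.cong refl) (auto simp: hom_mult[OF s] sf_of_rat[OF L] hom_of_rat[OF s L])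
  finally show ?thesis .
qed




lemma union_cover:
  assumes F: "subfield_C F"
  shows "compositum F Qab \<subseteq> \<Union> {genf (F \<union> \<Union> S) | S. finite S \<and> (\<forall>K\<in>S. abelian_galois_over_Q K)}"
proof -
  define U where "U = \<Union> {genf (F \<union> \<Union> S) | S. finite S \<and> (\<forall>K\<in>S. abelian_galois_over_Q K)}"
  have dir: "\<exists>S. finite S \<and> (\<forall>K\<in>S. abelian_galois_over_Q K) \<and> x \<in> genf (F \<union> \<Union> S) \<and> y \<in> genf (F \<union> \<Union> S)"
    if x: "x \<in> U" and y: "y \<in> U" for x y
  proof -
    obtain S1 where S1: "finite S1" "\<forall>K\<in>S1. abelian_galois_over_Q K" "x \<in> genf (F \<union> \<Union> S1)"
      using x unfolding U_def by blast
    obtain S2 where S2: "finite S2" "\<forall>K\<in>S2. abelian_galois_over_Q K" "y \<in> genf (F \<union> \<Union> S2)"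
      using y unfolding U_def by blast
    have "genf (F \<union> \<Union> S1) \<subseteq> genf (F \<union> \<Union> (S1 \<union> S2))" by (rule genf_mono) blast
    moreover have "genf (F \<union> \<Union> S2) \<subseteq> genf (F \<union> \<Union> (S1 \<union> S2))" by (rule genf_mono) blast
    ultimately show ?thesis using S1 S2 by (intro exI[of _ "S1 \<union> S2"]) auto
  qed
  have inU: "z \<in> U" if "finite S" "\<forall>K\<in>S. abelian_galois_over_Q K" "z \<in> genf (F \<union> \<Union> S)" for S z
    using that unfolding U_def by blast
  have Usf: "subfield_C U"
    unfolding subfield_C_def
  proof (intro conjI ballI impI)
    have "0 \<in> genf (F \<union> \<Union> {})" "1 \<in> genf (F \<union> \<Union> {})" using genf_subfield sf_0 sf_1 by auto
    then show "0 \<in> U" "1 \<in> U" using inU[of "{}"] by auto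
  next
    fix x y assume x: "x \<in> U" and y: "y \<in> U"
    then obtain S where S: "finite S" "\<forall>K\<in>S. abelian_galois_over_Q K" "x \<in> genf (F \<union> \<Union> S)" "y \<in> genf (F \<union> \<Union> S)"
      using dir by blast
    have sf: "subfield_C (genf (F \<union> \<Union> S))" by (rule genf_subfield)
    show "x + y \<in> U" using inU[OF S(1,2) sf_add[OF sf S(3,4)]] .
    show "x - y \<in> U" using inU[OF S(1,2) sf_diff[OF sf S(3,4)]] .
    show "x * y \<in> U" using inU[OF S(1,2) sf_mult[OF sf S(3,4)]] .
  next
    fix x assume x: "x \<in> U"
    then obtain S where S: "finite S" "\<forall>K\<in>S. abelian_galois_over_Q K" "x \<in> genf (F \<union> \<Union> S)"
      unfolding U_def by blast
    show "inverse x \<in> U" using inU[OF S(1,2) sf_inverse[OF genf_subfield S(3)]] .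
  qed
  have FU: "F \<subseteq> U" using inU[of "{}"] genf_sup[of F] by auto
  have QU: "Qab \<subseteq> U"
  proof
    fix z assume "z \<in> Qab"
    then obtain K where K: "abelian_galois_over_Q K" "z \<in> K" unfolding Qab_def by blast
    have "z \<in> genf (F \<union> \<Union> {K})" using K(2) genf_sup[of "F \<union> \<Union> {K}"] by auto
    then show "z \<in> U" using inU[of "{K}"] K(1) by auto
  qed
  show ?thesis unfolding compositum_genf U_def[symmetric]
    using genf_least[OF Usf] FU QU by blast
qed

lemma galois_union:
  assumes F: "finite_galois_over_Q F"
  shows "finite S \<Longrightarrow> (\<forall>K\<in>S. finite_galois_over_Q K) \<Longrightarrow> finite_galois_over_Q (genf (F \<union> \<Union> S))"
proof (induction S rule: finite_induct)
  case empty
  have "genf F \<subseteq> F" using genf_least[OF galois_sf[OF F]] by blast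
  then have "genf F = F" using genf_sup[of F] by blast
  then show ?case using F by simp
next
  case (insert K S)
  have "genf (F \<union> \<Union> (insert K S)) = genf ((F \<union> \<Union> S) \<union> K)" by (simp add: Un_ac)
  also have "\<dots> = genf (genf (F \<union> \<Union> S) \<union> K)" by (rule genf_Un)
  finally show ?case using comp2_galois insert by simp
qed

lemma eq_subfield:
  assumes L: "subfield_C L" and f: "hom_on L f" and g: "hom_on L g"
  shows "subfield_C {w \<in> L. f w = g w}"
  unfolding subfield_C_def
proof (intro conjI ballI impI)
  show "0 \<in> {w \<in> L. f w = g w}" using hom_0[OF f L] hom_0[OF g L] sf_0[OF L] by simp
  show "1 \<in> {w \<in> L. f w = g w}" using hom_1[OF f] hom_1[OF g] sf_1[OF L] by simp
  fix x y assume x: "x \<in> {w \<in> L. f w = g w}" and y: "y \<in> {w \<in> L. f w = g w}"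
  then show "x + y \<in> {w \<in> L. f w = g w}" "x - y \<in> {w \<in> L. f w = g w}" "x * y \<in> {w \<in> L. f w = g w}"
    using hom_add[OF f] hom_diff[OF f L] hom_mult[OF f] hom_add[OF g] hom_diff[OF g L] hom_mult[OF g]
      sf_add[OF L] sf_diff[OF L] sf_mult[OF L] by auto
next
  fix x assume x: "x \<in> {w \<in> L. f w = g w}"
  then show "inverse x \<in> {w \<in> L. f w = g w}"
    using hom_inverse[OF f L] hom_inverse[OF g L] sf_inverse[OF L] by auto
qed




lemma main_bound:
  fixes a :: int and F :: "complex set" and m :: nat
  assumes sq: "squarefree a" and a1: "a \<noteq> 1" and a2: "a \<noteq> -1"
    and Fg: "finite_galois_over_Q F"
    and BF: "finite BF" "BF \<subseteq> F" "F = Q.span BF"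
    and P: "\<And>b. b \<in> BF \<Longrightarrow> poly (mr (P b)) b = 0" and P0: "\<And>b. b \<in> BF \<Longrightarrow> P b \<noteq> 0"
    and m: "m > 0" and x: "x \<in> compositum F Qab" and xm: "x ^ m = of_int a"
  shows "m \<le> 4 * card (PiE BF (\<lambda>b. {y. poly (mr (P b)) y = 0}))"
proof -
  define R where "R = (\<lambda>b. {y. poly (mr (P b)) y = 0})"
  have Fsf: "subfield_C F" using galois_sf[OF Fg] .
  obtain S where S: "finite S" "\<forall>K\<in>S. abelian_galois_over_Q K" "x \<in> genf (F \<union> \<Union> S)"
    using union_cover[OF Fsf] x by blast
  define L where "L = genf (F \<union> \<Union> S)"
  have Sg: "\<forall>K\<in>S. finite_galois_over_Q K" using S(2) by (simp add: abelian_galois_over_Q_def)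
  have Lg: "finite_galois_over_Q L" unfolding L_def using galois_union[OF Fg S(1) Sg] .
  have Lsf: "subfield_C L" and Lfin: "finite_over_Q L" using Lg galois_sf galois_fin by auto
  have FL: "F \<subseteq> L" unfolding L_def using genf_sup[of "F \<union> \<Union> S"] by blast
  have KL: "K \<subseteq> L" if "K \<in> S" for K using genf_sup[of "F \<union> \<Union> S"] that unfolding L_def by blast
  have xL: "x \<in> L" using S(3) by (simp add: L_def)
  have a0: "a \<noteq> 0" using sq by auto
  have x0: "x \<noteq> 0" using xm a0 m by (auto simp: power_0_left)
  have cL: "cnj w \<in> L" if "w \<in> L" for w using hom_maps[OF Lg hom_on_cnj that] .
  define s where "s = x * cnj x"
  have sL: "s \<in> L" unfolding s_def using xL cL sf_mult[OF Lsf] by blast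
  define r where "r = (Re x)\<^sup>2 + (Im x)\<^sup>2"
  have sr: "s = of_real r" unfolding s_def r_def by (rule complex_mult_cnj)
  have r0: "r > 0" using x0 unfolding r_def by (simp add: complex_neq_0 add_pos_nonneg add_nonneg_pos sum_power2_gt_zero_iff)
  have spow: "s ^ m = of_int (a ^ 2)"
  proof -
    have "s ^ m = x ^ m * cnj (x ^ m)" unfolding s_def by (simp add: power_mult_distrib)
    also have "\<dots> = of_int a * of_int a" using xm by simp
    finally show ?thesis by (simp add: power2_eq_square)
  qed
  define t where "t = s ^ 2"
  have tL: "t \<in> L" unfolding t_def using sf_power[OF Lsf sL] .
  have tpow: "t ^ m = of_int (a ^ 4)"
  proof -
    have "t ^ m = (s ^ m) ^ 2" unfolding t_def by (simp add: power_mult[symmetric] mult.commute)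
    also have "\<dots> = of_int (a ^ 4)" using spow by (simp add: power_mult[symmetric])
    finally show ?thesis .
  qed
  have C1: "\<forall>w\<in>L. sg (cnj w) = cnj (sg w)" if sg: "hom_on L sg" and fixF: "\<forall>f\<in>F. sg f = f" for sg
  proof -
    have h1: "hom_on L (sg \<circ> cnj)" using hom_comp[OF Lg sg hom_on_cnj] .
    have h2: "hom_on L (cnj \<circ> sg)" using hom_comp[OF Lg hom_on_cnj sg] .
    define C where "C = {w \<in> L. (sg \<circ> cnj) w = (cnj \<circ> sg) w}"
    have Csf: "subfield_C C" unfolding C_def by (rule eq_subfield[OF Lsf h1 h2])
    have "F \<subseteq> C"
    proof
      fix f assume f: "f \<in> F"
      have "cnj f \<in> F" using hom_maps[OF Fg hom_on_cnj f] .
      then show "f \<in> C" using f FL fixF unfolding C_def by auto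
    qed
    moreover have "K \<subseteq> C" if K: "K \<in> S" for K
    proof
      fix k assume k: "k \<in> K"
      have Kg: "abelian_galois_over_Q K" using S(2) K by blast
      have Kfg: "finite_galois_over_Q K" using Kg by (simp add: abelian_galois_over_Q_def)
      have "sg \<in> field_auts K" using hom_aut[OF Kfg hom_on_subset[OF sg KL[OF K]]] .
      moreover have "cnj \<in> field_auts K" using cnj_aut[OF Kfg] .
      ultimately have "sg (cnj k) = cnj (sg k)" using Kg k unfolding abelian_galois_over_Q_def by blast
      then show "k \<in> C" using k KL[OF K] unfolding C_def by auto
    qed
    ultimately have "F \<union> \<Union> S \<subseteq> C" by blast
    then have "L \<subseteq> C" unfolding L_def using genf_least[OF Csf[unfolded C_def] ] unfolding C_def by blast
    then show ?thesis unfolding C_def by auto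
  qed
  have C2: "sg t = t" if sg: "hom_on L sg" and fixF: "\<forall>f\<in>F. sg f = f" for sg
  proof -
    have "sg (cnj s) = cnj (sg s)" using C1[OF sg fixF] sL by blast
    moreover have "cnj s = s" unfolding sr by simp
    ultimately have "cnj (sg s) = sg s" by simp
    then have "sg s \<in> \<real>" using Reals_cnj_iff by blast
    then obtain r' where r': "sg s = of_real r'" by (auto elim: Reals_cases)
    have "sg s ^ m = sg (s ^ m)" using hom_power[OF sg Lsf sL] by simp
    also have "\<dots> = of_int (a ^ 2)" unfolding spow by (rule hom_of_int[OF sg Lsf])
    also have "\<dots> = s ^ m" using spow by simp
    finally have "of_real (r' ^ m) = (of_real (r ^ m) :: complex)" using r' sr by simp
    then have "r' ^ m = r ^ m" using of_real_eq_iff by blast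
    then have "\<bar>r'\<bar> ^ m = r ^ m" using r0 by (metis power_abs abs_of_pos)
    then have "\<bar>r'\<bar> = r" using power_eq_imp_eq_base[of "\<bar>r'\<bar>" m r] r0 m by simp
    then have "r' ^ 2 = r ^ 2" by (metis power2_abs)
    then have "sg s ^ 2 = s ^ 2" using r' sr by (metis of_real_power)
    then show ?thesis unfolding t_def using hom_power[OF sg Lsf sL] by simp
  qed
  have C3: "sg t = sg' t" if sg: "hom_on L sg" and sg': "hom_on L sg'" and agr: "\<forall>f\<in>F. sg f = sg' f"
    for sg sg'
  proof -
    have bij: "bij_betw sg L L" using hom_bij[OF Lg sg] .
    have inj: "inj_on sg L" and im: "sg ` L = L" using bij by (auto simp: bij_betw_def)
    define iota where "iota = inv_into L sg"
    have hi: "hom_on L iota" unfolding iota_def by (rule hom_inv[OF Lsf sg bij])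
    have ht: "hom_on L (iota \<circ> sg')" using hom_comp[OF Lg hi sg'] .
    have "\<forall>f\<in>F. (iota \<circ> sg') f = f"
    proof
      fix f assume f: "f \<in> F"
      then have "sg' f = sg f" using agr by simp
      have fL: "f \<in> L" using f FL by blast
      have "(iota \<circ> sg') f = inv_into L sg (sg f)" unfolding iota_def using \<open>sg' f = sg f\<close> by simp
      also have "\<dots> = f" by (rule inv_into_f_f[OF inj fL])
      finally show "(iota \<circ> sg') f = f" .
    qed
    then have tt: "(iota \<circ> sg') t = t" using C2[OF ht] by blast
    have mem: "sg' t \<in> sg ` L" using hom_maps[OF Lg sg' tL] im by simp
    have e1: "sg (iota (sg' t)) = sg' t" unfolding iota_def by (rule f_inv_into_f[OF mem])
    have e2: "iota (sg' t) = t" using tt by simp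
    from e1 e2 show ?thesis by simp
  qed
  have C3': "\<forall>f\<in>F. sg f = sg' f" if sg: "hom_on L sg" and sg': "hom_on L sg'" and agr: "\<forall>b\<in>BF. sg b = sg' b"
    for sg sg'
  proof
    fix f assume "f \<in> F"
    then obtain u where u: "f = (\<Sum>v\<in>BF. qs (u v) v)" using BF(3) Q.span_finite[OF BF(1)] by auto
    have BL: "BF \<subseteq> L" using BF(2) FL by blast
    have "sg f = (\<Sum>v\<in>BF. of_rat (u v) * sg v)" unfolding u qs_def by (rule hom_span[OF Lsf sg BL])
    also have "\<dots> = (\<Sum>v\<in>BF. of_rat (u v) * sg' v)" using agr by simp
    also have "\<dots> = sg' f" unfolding u qs_def by (rule hom_span[OF Lsf sg' BL, symmetric])
    finally show "sg f = sg' f" .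
  qed
  define Emb where "Emb = {sg. hom_on L sg}"
  define Orb where "Orb = (\<lambda>sg. sg t) ` Emb"
  define h where "h v = (SOME sg. hom_on L sg \<and> restrict sg BF = v) t" for v
  have OPi: "Orb \<subseteq> h ` PiE BF R"
  proof
    fix w assume "w \<in> Orb"
    then obtain sg where sg: "hom_on L sg" "w = sg t" unfolding Orb_def Emb_def by blast
    have inR: "restrict sg BF \<in> PiE BF R"
      unfolding restrict_PiE_iff
    proof
      fix b assume b: "b \<in> BF"
      have bL: "b \<in> L" using b BF(2) FL by blast
      have "poly (mr (P b)) (sg b) = sg (poly (mr (P b)) b)" using poly_hom_Rats[OF sg(1) Lsf over_mr bL] .
      also have "\<dots> = 0" using P[OF b] hom_0[OF sg(1) Lsf] by simp
      finally show "sg b \<in> R b" by (simp add: R_def)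
    qed
    have "\<exists>sg'. hom_on L sg' \<and> restrict sg' BF = restrict sg BF" using sg(1) by blast
    then have sgs: "hom_on L (SOME sg'. hom_on L sg' \<and> restrict sg' BF = restrict sg BF) \<and>
        restrict (SOME sg'. hom_on L sg' \<and> restrict sg' BF = restrict sg BF) BF = restrict sg BF"
      by (rule someI_ex)
    define sg'' where "sg'' = (SOME sg'. hom_on L sg' \<and> restrict sg' BF = restrict sg BF)"
    have s1: "hom_on L sg''" and s2: "restrict sg'' BF = restrict sg BF" using sgs unfolding sg''_def by auto
    have "\<forall>b\<in>BF. sg'' b = sg b" using s2 by (metis restrict_apply')
    then have "\<forall>f\<in>F. sg'' f = sg f" using C3'[OF s1 sg(1)] by blast
    then have "sg'' t = sg t" using C3[OF s1 sg(1)] by blast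
    then have "h (restrict sg BF) = w" unfolding h_def sg''_def[symmetric] using sg(2) by simp
    then show "w \<in> h ` PiE BF R" using inR by blast
  qed
  have finR: "finite (R b)" if "b \<in> BF" for b
    unfolding R_def using poly_roots_finite[of "mr (P b)"] P0[OF that] mr_0_iff by auto
  have finPi: "finite (PiE BF R)" using finite_PiE[OF BF(1) finR] .
  have finO: "finite Orb" using finite_subset[OF OPi finite_imageI[OF finPi]] .
  have cardO: "card Orb \<le> card (PiE BF R)"
    using card_mono[OF finite_imageI[OF finPi] OPi] card_image_le[OF finPi, of h] by linarith
  have OL: "Orb \<subseteq> L" unfolding Orb_def Emb_def using hom_maps[OF Lg _ tL] by blast
  have tO: "t \<in> Orb" unfolding Orb_def Emb_def by (rule image_eqI[of _ _ id]) (simp_all add: hom_on_id)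
  have cO1: "card Orb \<ge> 1" using tO finO by (metis One_nat_def Suc_leI card_gt_0_iff empty_iff)
  have perm: "sg ` Orb = Orb" if sg: "hom_on L sg" for sg
  proof (rule endo_inj_surj[OF finO])
    show "sg ` Orb \<subseteq> Orb"
    proof
      fix w assume "w \<in> sg ` Orb"
      then obtain sg' where sg': "hom_on L sg'" "w = sg (sg' t)" unfolding Orb_def Emb_def by blast
      have hc: "hom_on L (sg \<circ> sg')" using hom_comp[OF Lg sg sg'(1)] .
      show "w \<in> Orb" unfolding Orb_def Emb_def
        by (rule image_eqI[of _ _ "sg \<circ> sg'"]) (simp_all add: sg'(2) hc)
    qed
    show "inj_on sg Orb" using hom_inj[OF sg Lsf] OL by (rule inj_on_subset)
  qed
  define pp where "pp = (\<Prod>w\<in>Orb. w)"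
  have ppL: "pp \<in> L" unfolding pp_def by (rule sf_prod[OF Lsf]) (use OL in blast)
  have ppfix: "sg pp = pp" if sg: "hom_on L sg" for sg
  proof -
    have "sg pp = (\<Prod>w\<in>Orb. sg w)" unfolding pp_def using OL by (intro hom_prod[OF sg Lsf]) blast
    also have "\<dots> = (\<Prod>w\<in>sg ` Orb. w)"
      using prod.reindex[OF inj_on_subset[OF hom_inj[OF sg Lsf] OL], of "\<lambda>w. w"] by simp
    also have "\<dots> = pp" unfolding perm[OF sg] pp_def ..
    finally show ?thesis .
  qed
  have ppQ: "pp \<in> \<rat>" using fixed_rat[OF Lsf Lfin ppL] ppfix by blast
  have opow: "w ^ m = of_int (a ^ 4)" if wO: "w \<in> Orb" for w
  proof -
    obtain sg where sg: "hom_on L sg" "w = sg t" using wO unfolding Orb_def Emb_def by blast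
    have "w ^ m = sg (t ^ m)" using hom_power[OF sg(1) Lsf tL] sg(2) by simp
    also have "\<dots> = of_int (a ^ 4)" unfolding tpow by (rule hom_of_int[OF sg(1) Lsf])
    finally show ?thesis .
  qed
  have "pp ^ m = (\<Prod>w\<in>Orb. w ^ m)" unfolding pp_def by (rule prod_power_distrib)
  also have "\<dots> = (\<Prod>w\<in>Orb. of_int (a ^ 4))" using opow by (rule prod.cong[OF refl])
  also have "\<dots> = of_int (a ^ (4 * card Orb))" by (simp add: power_mult)
  finally have pppow: "pp ^ m = of_int (a ^ (4 * card Orb))" .
  obtain q where q: "pp = of_rat q" using ppQ by (auto elim: Rats_cases)
  have "of_rat (q ^ m) = (of_rat (of_int (a ^ (4 * card Orb))) :: complex)"
    using pppow q by (simp add: of_rat_power)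
  then have "q ^ m = of_int (a ^ (4 * card Orb))" using of_rat_eq_iff by blast
  then have "m dvd 4 * card Orb" using rat_power_dvd[OF sq a1 a2 m] by blast
  then have "m \<le> 4 * card Orb" using cO1 by (simp add: dvd_imp_le)
  then show ?thesis using cardO unfolding R_def by linarith
qed

theorem mainTheorem13:
  fixes a :: int and F :: "complex set"
  assumes "squarefree a" and "a \<noteq> 1" and "a \<noteq> -1"
    and "finite_galois_over_Q F"
  shows "\<exists>N :: nat. N > 0 \<and> (\<forall>m :: nat. m > 0 \<longrightarrow>
           (\<exists>x\<in>compositum F Qab. x ^ m = of_int a) \<longrightarrow> m dvd N)"
proof -
  have Fg: "finite_galois_over_Q F" using assms(4) .
  obtain BF where BF: "finite BF" "BF \<subseteq> F" "F = Q.span BF"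
    using galois_fin[OF Fg] finite_over_Q_span by blast
  have "\<forall>b\<in>BF. \<exists>p. irreducible p \<and> poly (mr p) b = 0"
    using alg_irred galois_alg[OF Fg] BF(2) by blast
  then obtain P where P: "\<forall>b\<in>BF. irreducible (P b) \<and> poly (mr (P b)) b = 0" by metis
  define D where "D = card (PiE BF (\<lambda>b. {y. poly (mr (P b)) y = 0}))"
  show ?thesis
  proof (intro exI[of _ "fact (4 * D)"] conjI allI impI)
    show "fact (4 * D) > (0::nat)" by simp
    fix m :: nat assume m: "m > 0" and ex: "\<exists>x\<in>compositum F Qab. x ^ m = of_int a"
    then obtain x where x: "x \<in> compositum F Qab" "x ^ m = of_int a" by blast
    have P1: "poly (mr (P b)) b = 0" if "b \<in> BF" for b using P that by blast
    have P2: "P b \<noteq> 0" if "b \<in> BF" for b using P that by auto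
    have "m \<le> 4 * D" unfolding D_def
      using main_bound[OF assms(1-3) Fg BF P1 P2 m x] .
    then show "m dvd fact (4 * D)" using m by (intro dvd_fact) auto
  qed
qed


end
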